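(* Let $\mu\in\mathcal P_2(\mathbb R^d)$, $\psi\in T_\mu(\mathcal P_2(\mathbb R^d))$, let $\eta\in\mathcal P(C([0,1],\mathbb R^d))$ satisfy $(e_0)_\#\eta=\mu$, and let $\Psi$ be a parallel transport of $\psi$ along $\eta$. Then for every $t\in[0,1]$ there exists a measurable map $x\mapsto\psi_{t,x}\in\mathcal P(\mathbb R^d)$ with $\int_{\mathbb R^d}\int_{\mathbb R^d}|z|^2\psi_{t,x}(dz)\,((e_t)_\#\eta)(dx)<\infty$ such that $(e_t)_\#\Psi(dx,dz)=((e_t)_\#\eta)(dx)\,\psi_{t,x}(dz)$; i.e. $(e_t)_\#\Psi$ corresponds to an element $\psi_t\in T_{(e_t)_\#\eta}(\mathcal P_2(\mathbb R^d))$.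
   Context: $\mathcal P(O)$ denotes Borel probability measures on $O$; $\mathcal P_2(\mathbb R^d)$ those on $\mathbb R^d$ with finite second moment; $f_\#m$ is the image measure. For $\mu$ a probability measure on $\mathbb R^d$, $T_\mu(\mathcal P_2(\mathbb R^d))$ is the set of measurable maps $\psi:\mathbb R^d\to\mathcal P(\mathbb R^d)$, $x\mapsto\psi_x$, with $\int\int|z|^2\psi_x(dz)\mu(dx)<\infty$; such $\psi$ is identified with the measure $\mu(dx)\psi_x(dz)$ on $\mathbb R^{2d}$. For $t\in[0,1]$, $e_t$ is the evaluation map $w\mapsto w(t)$ on spaces of continuous curves. $\pi_1,\pi_2$ are the projections of $\mathbb R^d\times\mathbb R^d$. Let $p_1:C([0,1],\mathbb R^{2d})\to C([0,1],\mathbb R^d)$, $p_1(w)(t)=\pi_1(w(t))$; let $C^1_y([0,1],\mathbb R^{2d})$ be the set of continuous curves $w$ such that $t\mapsto\pi_2(w(t))$ is $C^1$, and on it $\partial_2(w)(t)=\frac{d}{dt}\pi_2(w(t))$. Given $\mu\in\mathcal P_2(\mathbb R^d)$, $\psi\in T_\mu(\mathcal P_2(\mathbb R^d))$ and $\eta\in\mathcal P(C([0,1],\mathbb R^d))$ with $(e_0)_\#\eta=\mu$, a parallel transport of $\psi$ along $\eta$ is a probability measure $\Psi$ on $C([0,1],\mathbb R^{2d})$ concentrated on $C^1_y([0,1],\mathbb R^{2d})$ such that $(p_1)_\#\Psi=\eta$, $(\partial_2)_\#\Psi=\delta_0$ (Dirac mass at the zero curve), and $(e_0)_\#\Psi(dx,dz)=\mu(dx)\psi_x(dz)$.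 *)

theory Defs
  imports "HOL-Probability.Probability"
begin

text \<open>Continuous curves on [0,1], represented extensionally as functions on the reals
  that vanish outside [0,1].\<close>
definition C01 :: "(real \<Rightarrow> 'b::real_normed_vector) set" where
  "C01 = {w. continuous_on {0..1} w \<and> (\<forall>t. t \<notin> {0..1} \<longrightarrow> w t = 0)}"

text \<open>The Borel sigma-algebra of C([0,1],E) for the sup norm; for Euclidean E it coincides
  with the sigma-algebra generated by the evaluation maps, which is what we use.\<close>
definition curves :: "(real \<Rightarrow> 'b::real_normed_vector) measure" where
  "curves = sigma C01 {(\<lambda>w. w t) -` B \<inter> C01 | t B. t \<in> {0..1} \<and> B \<in> sets borel}"

definition ev :: "real \<Rightarrow> (real \<Rightarrow> 'b) \<Rightarrow> 'b" where
  "ev t w = w t"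

definition p1 :: "(real \<Rightarrow> 'a \<times> 'b) \<Rightarrow> real \<Rightarrow> 'a" where
  "p1 w = (\<lambda>t. fst (w t))"

definition C1y :: "(real \<Rightarrow> 'a::real_normed_vector \<times> 'b::real_normed_vector) set" where
  "C1y = {w \<in> C01. \<exists>D. continuous_on {0..1} D \<and>
            (\<forall>t\<in>{0..1}. ((\<lambda>s. snd (w s)) has_vector_derivative D t) (at t within {0..1}))}"

text \<open>\<partial>_2 : derivative of the second component (set to the zero curve off C^1_y,
  where it is not defined in the paper; irrelevant since Psi is concentrated on C^1_y).\<close>
definition d2 :: "(real \<Rightarrow> 'a::real_normed_vector \<times> 'b::real_normed_vector) \<Rightarrow> real \<Rightarrow> 'b" where
  "d2 w = (if w \<in> C1y then
             (\<lambda>t. if t \<in> {0..1} then vector_derivative (\<lambda>s. snd (w s)) (at t within {0..1}) else 0)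
           else (\<lambda>_. 0))"

definition P2 :: "'a::euclidean_space measure set" where
  "P2 = {\<mu> \<in> space (prob_algebra borel). (\<integral>\<^sup>+x. ennreal (norm x ^ 2) \<partial>\<mu>) < \<infinity>}"

definition Tan :: "'a::euclidean_space measure \<Rightarrow> ('a \<Rightarrow> 'a measure) set" where
  "Tan \<mu> = {\<psi>. \<psi> \<in> borel \<rightarrow>\<^sub>M prob_algebra borel \<and>
              (\<integral>\<^sup>+x. (\<integral>\<^sup>+z. ennreal (norm z ^ 2) \<partial>(\<psi> x)) \<partial>\<mu>) < \<infinity>}"

definition plan :: "'a::euclidean_space measure \<Rightarrow> ('a \<Rightarrow> 'a measure) \<Rightarrow> ('a \<times> 'a) measure" where
  "plan \<mu> \<psi> = \<mu> \<bind> (\<lambda>x. distr (\<psi> x) borel (\<lambda>z. (x, z)))"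

definition parallel_transport ::
  "'a::euclidean_space measure \<Rightarrow> ('a \<Rightarrow> 'a measure) \<Rightarrow> (real \<Rightarrow> 'a) measure
     \<Rightarrow> (real \<Rightarrow> 'a \<times> 'a) measure \<Rightarrow> bool" where
  "parallel_transport \<mu> \<psi> \<eta> \<Psi> \<longleftrightarrow>
     \<Psi> \<in> space (prob_algebra curves) \<and>
     C1y \<in> sets \<Psi> \<and> emeasure \<Psi> C1y = 1 \<and>
     distr \<Psi> curves p1 = \<eta> \<and>
     distr \<Psi> curves d2 = return curves (\<lambda>_. 0) \<and>
     distr \<Psi> borel (ev 0) = plan \<mu> \<psi>"

end

theory Submission
  imports Defs
begin

definition bitd :: "nat \<Rightarrow> real \<Rightarrow> real" where
  "bitd k s = of_int (floor (2^(k+1) * s)) - 2 * of_int (floor (2^k * s))"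

lemma floor_double_cases: "(floor (2 * (y::real))) = 2 * (floor (y)) \<or> (floor (2*y)) = 2 * (floor (y)) + 1"
proof -
  have a: "of_int (floor (y)) \<le> y" "y < of_int (floor (y)) + 1" by linarith+
  have "2 * (floor (y)) \<le> (floor (2*y))" using a by (simp add: le_floor_iff)
  moreover have "2*y < of_int (2*floor y + 2)" using a by (simp, linarith)
  then have "(floor (2*y)) < 2*(floor (y)) + 2" by (rule floor_less_iff[THEN iffD2])
  ultimately show ?thesis by linarith
qed

lemma bitd_01: "bitd k s \<in> {0,1}"
proof -
  have e: "(2::real)^(k+1) * s = 2 * (2^k * s)" by simp
  show ?thesis unfolding bitd_def e using floor_double_cases[of "2^k * s"] by auto
qed

lemma bitd_partial: "(\<Sum>k<N. bitd k s / 2^(k+1)) = of_int (floor (2^N * s))/2^N - of_int (floor (s))"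
proof (induction N)
  case 0 then show ?case by simp
next
  case (Suc N)
  have "(\<Sum>k<Suc N. bitd k s / 2^(k+1)) = of_int (floor (2^N * s))/2^N - of_int (floor (s)) + bitd N s / 2^(N+1)"
    using Suc by simp
  also have "\<dots> = of_int (floor (2^(Suc N) * s))/2^(Suc N) - of_int (floor (s))"
    unfolding bitd_def by (simp add: field_simps)
  finally show ?case .
qed

lemma dyadic_lim: "(\<lambda>N. of_int (floor (2^N * s))/2^N) \<longlonglongrightarrow> (s::real)"
proof (rule tendsto_sandwich[of "\<lambda>N. s - 1/2^N" _ _ "\<lambda>N. s"])
  show "\<forall>\<^sub>F N in sequentially. s - 1/2^N \<le> of_int (floor (2^N * s))/2^N"
  proof (intro always_eventually allI)
    fix N :: nat
    have "2^N * s - 1 \<le> of_int (floor (2^N * s))" by linarith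
    then have "(2^N * s - 1)/2^N \<le> of_int (floor (2^N * s))/2^N" by (rule divide_right_mono) auto
    moreover have "(2^N * s - 1)/2^N = s - 1/2^N" by (simp add: field_simps)
    ultimately show "s - 1/2^N \<le> of_int (floor (2^N * s))/2^N" by simp
  qed
  show "\<forall>\<^sub>F N in sequentially. of_int (floor (2^N * s))/2^N \<le> s"
  proof (intro always_eventually allI)
    fix N :: nat
    have "of_int (floor (2^N * s)) \<le> 2^N * s" by linarith
    then show "of_int (floor (2^N * s))/2^N \<le> s" by (simp add: field_simps)
  qed
  have "(\<lambda>N. s - (1/2)^N) \<longlonglongrightarrow> s - 0"
    by (intro tendsto_intros LIMSEQ_power_zero) auto
  then show "(\<lambda>N. s - 1/2^N) \<longlonglongrightarrow> s" by (simp add: power_one_over)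
qed simp

lemma bitd_sums: "s \<in> {0..<1} \<Longrightarrow> (\<lambda>k. bitd k s / 2^(k+1)) sums s"
  unfolding sums_def bitd_partial
proof -
  assume "s \<in> {0..<1}"
  then have "(floor (s)) = 0" by (simp add: floor_eq_iff)
  then show "(\<lambda>n. of_int (floor (2 ^ n * s)) / 2 ^ n - of_int (floor (s))) \<longlonglongrightarrow> s"
    using dyadic_lim[of s] by simp
qed

definition qd :: "nat \<Rightarrow> real \<Rightarrow> real" where
  "qd n y = of_int (floor (4^(n+1) * y)) - 4 * of_int (floor (4^n * y))"

lemma geo4_sums: "(\<lambda>i. 1 / (4::real)^(i+1)) sums (1/3)"
proof -
  have "(\<lambda>i. (1/4::real)^i) sums (1 / (1 - 1/4))" by (rule geometric_sums) simp
  from sums_mult[OF this, of "1/4"] show ?thesis by (simp add: power_one_over field_simps)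
qed

lemma qd_enc:
  assumes c: "\<And>m. c m \<in> {0::real,1}"
  shows "qd N (\<Sum>m. c m / 4^(m+1)) = c N"
proof -
  define y where "y = (\<Sum>m. c m / 4^(m+1))"
  have c0: "0 \<le> c m" "c m \<le> 1" for m using c[of m] by auto
  have sg: "summable (\<lambda>i. 1 / (4::real)^(i+1))" using geo4_sums by (rule sums_summable)
  have sf: "summable (\<lambda>m. c m / 4^(m+1))"
    by (rule summable_comparison_test'[OF sg, of 0]) (use c0 in \<open>auto simp: divide_right_mono\<close>)
  define P where "P N = 4^N * (\<Sum>m<N. c m / 4^(m+1))" for N
  have Psuc: "P (Suc N) = 4 * P N + c N" for N
    unfolding P_def by (simp add: field_simps)
  have Pint: "\<exists>k::int. P N = of_int k" for N
  proof (induction N)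
    case 0 then show ?case by (auto simp: P_def)
  next
    case (Suc N)
    then obtain k where k: "P N = of_int k" by blast
    show ?case
    proof (cases "c N = 0")
      case True then show ?thesis using k Psuc[of N] by (intro exI[of _ "4*k"]) simp
    next
      case False then have "c N = 1" using c[of N] by auto
      then show ?thesis using k Psuc[of N] by (intro exI[of _ "4*k+1"]) simp
    qed
  qed
  have tail: "4^N * y - P N = (\<Sum>i. c (i+N) / 4^(i+1))" for N
  proof -
    have "y = (\<Sum>n. c (n+N) / 4^(n+N+1)) + (\<Sum>i<N. c i / 4^(i+1))"
      unfolding y_def using suminf_split_initial_segment[OF sf, of N] by simp
    moreover have "summable (\<lambda>n. c (n+N) / 4^(n+N+1))"
      using sf by (subst summable_iff_shift) simp
    then have "4^N * (\<Sum>n. c (n+N) / 4^(n+N+1)) = (\<Sum>n. 4^N * (c (n+N) / 4^(n+N+1)))"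
      by (rule suminf_mult[symmetric])
    moreover have "(\<lambda>n. 4^N * (c (n+N) / 4^(n+N+1))) = (\<lambda>n. c (n+N) / (4::real)^(n+1))"
      by (auto simp: power_add field_simps)
    ultimately show ?thesis unfolding P_def by (simp add: algebra_simps)
  qed
  have tb: "0 \<le> 4^N * y - P N \<and> 4^N * y - P N \<le> 1/3" for N
  proof -
    have s2: "summable (\<lambda>i. c (i+N) / (4::real)^(i+1))"
      by (rule summable_comparison_test'[OF sg, of 0]) (use c0 in \<open>auto simp: divide_right_mono\<close>)
    have "(\<Sum>i. c (i+N) / (4::real)^(i+1)) \<le> (\<Sum>i. 1 / (4::real)^(i+1))"
      by (rule suminf_le[OF _ s2 sg]) (use c0 in \<open>auto simp: divide_right_mono\<close>)
    moreover have "0 \<le> (\<Sum>i. c (i+N) / (4::real)^(i+1))"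
      by (rule suminf_nonneg[OF s2]) (use c0 in auto)
    ultimately show ?thesis using tail[of N] sums_unique[OF geo4_sums] by simp
  qed
  have fl: "of_int (floor (4^N * y)) = P N" for N
  proof -
    obtain k where k: "P N = of_int k" using Pint by blast
    have "floor (4^N * y) = k" unfolding floor_eq_iff using tb[of N] k by simp
    then show ?thesis using k by simp
  qed
  show ?thesis unfolding y_def[symmetric] qd_def fl using Psuc[of N] by simp
qed

definition sig :: "real \<Rightarrow> real" where "sig r = (1 + r / (1 + \<bar>r\<bar>)) / 2"
definition sinv :: "real \<Rightarrow> real" where "sinv s = (2 * s - 1) / (1 - \<bar>2 * s - 1\<bar>)"

lemma sig_aux: "- 1 < (r::real) / (1 + \<bar>r\<bar>)" "r / (1 + \<bar>r\<bar>) < 1"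
proof -
  have d: "0 < 1 + \<bar>r\<bar>" by simp
  have "- (1 + \<bar>r\<bar>) < r" "r < 1 + \<bar>r\<bar>" by linarith+
  then show "- 1 < r / (1 + \<bar>r\<bar>)" "r / (1 + \<bar>r\<bar>) < 1"
    using d by (simp_all only: pos_less_divide_eq pos_divide_less_eq mult_1 mult_minus_left)
qed

lemma sig_range: "sig r \<in> {0..<1}"
  using sig_aux[of r] unfolding sig_def by simp

lemma sinv_sig: "sinv (sig r) = r"
proof -
  have d: "0 < 1 + \<bar>r\<bar>" by simp
  have g: "2 * ((1 + u) / 2) - 1 = u" for u :: real by (simp add: field_simps)
  have a: "2 * sig r - 1 = r / (1 + \<bar>r\<bar>)" unfolding sig_def by (rule g)
  have b: "\<bar>r / (1 + \<bar>r\<bar>)\<bar> = \<bar>r\<bar> / (1 + \<bar>r\<bar>)" using d by (simp only: abs_divide)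
  have c: "1 - \<bar>r\<bar> / (1 + \<bar>r\<bar>) = 1 / (1 + \<bar>r\<bar>)" using d by (simp add: diff_divide_distrib[symmetric] divide_simps)
  have "r / (1 + \<bar>r\<bar>) / (1 / (1 + \<bar>r\<bar>)) = r" using d by simp
  then show ?thesis unfolding sinv_def a b c .
qed

lemma sig_meas[measurable]: "sig \<in> borel_measurable borel" unfolding sig_def by measurable
lemma sinv_meas[measurable]: "sinv \<in> borel_measurable borel" unfolding sinv_def by measurable
lemma bitd_meas[measurable]: "bitd k \<in> borel_measurable borel" unfolding bitd_def by measurable
lemma qd_meas[measurable]: "qd k \<in> borel_measurable borel" unfolding qd_def by measurable

definition bl :: "'a::euclidean_space list" where "bl = (SOME l. distinct l \<and> set l = Basis)"

lemma bl: "distinct (bl::'a::euclidean_space list)" "set (bl::'a list) = Basis"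
proof -
  have "\<exists>l. distinct l \<and> set l = (Basis::'a set)" using finite_distinct_list[OF finite_Basis] by metis
  then have "distinct (bl::'a list) \<and> set (bl::'a list) = Basis" unfolding bl_def by (rule someI_ex)
  then show "distinct (bl::'a::euclidean_space list)" "set (bl::'a list) = Basis" by auto
qed

lemma bl_len: "0 < length (bl::'a::euclidean_space list)"
proof -
  have "set (bl::'a list) \<noteq> {}" unfolding bl(2) by simp
  then show ?thesis by simp
qed

definition cdg :: "nat \<Rightarrow> 'a::euclidean_space \<Rightarrow> real" where
  "cdg n x = bitd (n div length (bl::'a list)) (sig (x \<bullet> (bl::'a list) ! (n mod length (bl::'a list))))"

definition enc :: "'a::euclidean_space \<Rightarrow> real" where
  "enc x = (\<Sum>n. cdg n x / 4^(n+1))"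

definition dec :: "real \<Rightarrow> 'a::euclidean_space" where
  "dec y = (\<Sum>j<length (bl::'a list). sinv (\<Sum>k. qd (k * length (bl::'a list) + j) y / 2^(k+1)) *\<^sub>R (bl::'a list) ! j)"

lemma enc_meas[measurable]: "(enc::'a::euclidean_space \<Rightarrow> real) \<in> borel_measurable borel"
  unfolding enc_def cdg_def by measurable

lemma dec_meas[measurable]: "(dec::real \<Rightarrow> 'a::euclidean_space) \<in> borel_measurable borel"
  unfolding dec_def by measurable

lemma dec_enc: "dec (enc x) = (x::'a::euclidean_space)"
proof -
  let ?d = "length (bl::'a list)"
  have d0: "0 < ?d" by (rule bl_len)
  have q: "qd (k * ?d + j) (enc x) = bitd k (sig (x \<bullet> (bl::'a list) ! j))" if "j < ?d" for k j
  proof -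
    have "qd (k * ?d + j) (enc x) = cdg (k * ?d + j) x"
      unfolding enc_def by (rule qd_enc) (simp only: cdg_def bitd_01)
    also have "\<dots> = bitd k (sig (x \<bullet> (bl::'a list) ! j))"
      unfolding cdg_def using that d0 by simp
    finally show ?thesis .
  qed
  have inner: "sinv (\<Sum>k. qd (k * ?d + j) (enc x) / 2^(k+1)) = x \<bullet> (bl::'a list) ! j" if "j < ?d" for j
    using sums_unique[OF bitd_sums[OF sig_range], of "x \<bullet> (bl::'a list) ! j"] q[OF that]
    by (simp add: sinv_sig)
  have "dec (enc x) = (\<Sum>j<?d. (x \<bullet> (bl::'a list) ! j) *\<^sub>R (bl::'a list) ! j)"
    unfolding dec_def
  proof (rule sum.cong[OF refl])
    fix j assume "j \<in> {..<?d}"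
    then have j: "j < ?d" by simp
    show "sinv (\<Sum>k. qd (k * ?d + j) (enc x) / 2^(k+1)) *\<^sub>R (bl::'a list) ! j = (x \<bullet> (bl::'a list) ! j) *\<^sub>R (bl::'a list) ! j"
      by (simp only: inner[OF j])
  qed
  also have "\<dots> = (\<Sum>b\<in>(\<lambda>j. (bl::'a list) ! j) ` {..<?d}. (x \<bullet> b) *\<^sub>R b)"
    by (rule sum.reindex[symmetric, unfolded comp_def]) (rule inj_on_nth[OF bl(1)], simp)
  also have "\<dots> = (\<Sum>b\<in>set (bl::'a list). (x \<bullet> b) *\<^sub>R b)"
  proof -
    have "(\<lambda>j. (bl::'a list) ! j) ` {..<?d} = set (bl::'a list)"
      by (auto simp: in_set_conv_nth)
    then show ?thesis by simp
  qed
  also have "\<dots> = x" by (simp add: bl(2) euclidean_representation)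
  finally show ?thesis .
qed

lemma AE_le_nn:
  assumes [measurable]: "f \<in> borel_measurable M" "g \<in> borel_measurable M"
  and le: "\<And>A. A \<in> sets M \<Longrightarrow> (\<integral>\<^sup>+x. f x * indicator A x \<partial>M) \<le> (\<integral>\<^sup>+x. g x * indicator A x \<partial>M)"
  and fin: "integral\<^sup>N M g \<noteq> \<infinity>"
  shows "AE x in M. f x \<le> g x"
proof -
  let ?N = "{x\<in>space M. g x < f x}"
  have N[measurable]: "?N \<in> sets M" by measurable
  have "(\<integral>\<^sup>+x. g x * indicator ?N x \<partial>M) \<le> integral\<^sup>N M g"
    by (intro nn_integral_mono) (auto split: split_indicator)
  then have fin2: "(\<integral>\<^sup>+x. g x * indicator ?N x \<partial>M) \<noteq> \<infinity>" using fin by (auto simp: top_unique)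
  have "(\<integral>\<^sup>+x. (f x - g x) * indicator ?N x \<partial>M) = (\<integral>\<^sup>+x. f x * indicator ?N x - g x * indicator ?N x \<partial>M)"
    by (auto intro!: nn_integral_cong simp: indicator_def)
  also have "\<dots> = (\<integral>\<^sup>+x. f x * indicator ?N x \<partial>M) - (\<integral>\<^sup>+x. g x * indicator ?N x \<partial>M)"
    by (rule nn_integral_diff) (use fin2 in \<open>auto split: split_indicator\<close>)
  also have "\<dots> = 0"
  proof -
    have a: "(\<integral>\<^sup>+x. f x * indicator ?N x \<partial>M) \<le> (\<integral>\<^sup>+x. g x * indicator ?N x \<partial>M)" by (rule le[OF N])
    then have "(\<integral>\<^sup>+x. f x * indicator ?N x \<partial>M) \<noteq> \<top>" using fin2 by (auto simp: top_unique)
    with a show ?thesis by (simp only: diff_eq_0_iff_ennreal less_top[symmetric]) simp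
  qed
  finally have "AE x in M. (f x - g x) * indicator ?N x = 0"
    by (subst (asm) nn_integral_0_iff_AE) auto
  then show ?thesis using AE_space[of M]
    by eventually_elim (auto split: split_indicator split_indicator_asm simp: ennreal_minus_eq_0 not_less)
qed

lemma disint:
  fixes \<nu> :: "('a::euclidean_space \<times> real) measure"
  assumes nu: "\<nu> \<in> space (prob_algebra borel)"
  shows "\<exists>\<kappa>. \<kappa> \<in> borel \<rightarrow>\<^sub>M prob_algebra borel \<and>
           (\<lambda>x. distr (\<kappa> x) borel (\<lambda>y. (x,y))) \<in> borel \<rightarrow>\<^sub>M prob_algebra borel \<and>
           \<nu> = distr \<nu> borel fst \<bind> (\<lambda>x. distr (\<kappa> x) borel (\<lambda>y. (x,y)))"
proof -
  have sets_nu[measurable_cong]: "sets \<nu> = sets borel" and pnu: "prob_space \<nu>"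
    using nu by (auto simp: space_prob_algebra)
  interpret P: prob_space \<nu> by (rule pnu)
  have "fst \<in> (borel::('a\<times>real) measure) \<rightarrow>\<^sub>M borel"
    using measurable_fst[of "borel::'a measure" "borel::real measure"] by (simp add: borel_prod)
  then have fst_m[measurable]: "fst \<in> \<nu> \<rightarrow>\<^sub>M (borel::'a measure)"
    by (simp add: measurable_cong_sets[OF sets_nu refl])
  have rect[measurable]: "A \<times> B \<in> sets \<nu>" if "A \<in> sets borel" "B \<in> sets borel" for A :: "'a set" and B :: "real set"
  proof -
    have "A \<times> B \<in> sets ((borel::'a measure) \<Otimes>\<^sub>M (borel::real measure))" using that by (rule pair_measureI)
    then have "A \<times> B \<in> sets (borel::('a\<times>real) measure)" unfolding borel_prod .
    then show ?thesis by (simp add: sets_nu)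
  qed
  define m where "m = distr \<nu> borel fst"
  have sets_m[measurable_cong]: "sets m = sets (borel::'a measure)" and space_m: "space m = UNIV"
    by (simp_all add: m_def)
  interpret M: prob_space m unfolding m_def by (rule P.prob_space_distr) (rule fst_m)
  have m_em: "emeasure m A = emeasure \<nu> (A \<times> UNIV)" if "A \<in> sets borel" for A
  proof -
    have "emeasure m A = emeasure \<nu> (fst -` A \<inter> space \<nu>)"
      unfolding m_def using that by (subst emeasure_distr) auto
    also have "fst -` A \<inter> space \<nu> = A \<times> UNIV"
      using sets_eq_imp_space_eq[OF sets_nu] by auto
    finally show ?thesis .
  qed
  define Nr where "Nr r = distr (density \<nu> (\<lambda>p. indicator {..r} (snd p))) borel fst" for r :: real
  have "snd \<in> (borel::('a\<times>real) measure) \<rightarrow>\<^sub>M borel"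
    using measurable_snd[of "borel::'a measure" "borel::real measure"] by (simp add: borel_prod)
  then have snd_m[measurable]: "snd \<in> \<nu> \<rightarrow>\<^sub>M (borel::real measure)"
    by (simp add: measurable_cong_sets[OF sets_nu refl])
  have space_nu: "space \<nu> = UNIV" using sets_eq_imp_space_eq[OF sets_nu] by simp
  have Nr_em: "emeasure (Nr r) A = emeasure \<nu> (A \<times> {..r})" if "A \<in> sets borel" for A r
  proof -
    have "emeasure (Nr r) A = emeasure (density \<nu> (\<lambda>p. indicator {..r} (snd p))) (fst -` A \<inter> space \<nu>)"
      unfolding Nr_def using that by (subst emeasure_distr) auto
    also have "\<dots> = (\<integral>\<^sup>+p. indicator {..r} (snd p) * indicator (fst -` A \<inter> space \<nu>) p \<partial>\<nu>)"
      using that by (subst emeasure_density) auto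
    also have "\<dots> = (\<integral>\<^sup>+p. indicator (A \<times> {..r}) p \<partial>\<nu>)"
      by (intro nn_integral_cong) (auto simp: space_nu split: split_indicator)
    also have "\<dots> = emeasure \<nu> (A \<times> {..r})"
      using that by (intro nn_integral_indicator rect) auto
    finally show ?thesis .
  qed
  have sets_Nr: "sets (Nr r) = sets m" for r by (simp add: Nr_def m_def)
  have ac: "absolutely_continuous m (Nr r)" for r
    unfolding absolutely_continuous_def
  proof
    fix A assume A: "A \<in> null_sets m"
    then have As: "A \<in> sets borel" by (simp add: null_sets_def sets_m)
    have "emeasure (Nr r) A = emeasure \<nu> (A \<times> {..r})" by (rule Nr_em[OF As])
    also have "\<dots> \<le> emeasure \<nu> (A \<times> UNIV)" by (intro emeasure_mono rect As) auto
    also have "\<dots> = 0" using null_setsD1[OF A] m_em[OF As] by simp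
    finally show "A \<in> null_sets (Nr r)" using As sets_Nr sets_m by (auto intro: null_setsI)
  qed
  define G where "G r = RN_deriv m (Nr r)" for r
  have G_m[measurable]: "G r \<in> borel_measurable borel" for r
    using borel_measurable_RN_deriv[of m "Nr r"] unfolding G_def by (simp add: measurable_cong_sets[OF sets_m refl])
  have dens: "density m (G r) = Nr r" for r
    unfolding G_def by (rule M.density_RN_deriv[OF ac sets_Nr])
  have I: "emeasure \<nu> (A \<times> {..r}) = (\<integral>\<^sup>+x. G r x * indicator A x \<partial>m)" if "A \<in> sets borel" for A r
    using that by (simp add: Nr_em[symmetric] dens[symmetric] emeasure_density)
  have fin: "integral\<^sup>N m (G r) \<noteq> \<infinity>" for r
  proof -
    have "integral\<^sup>N m (G r) = (\<integral>\<^sup>+x. G r x * indicator UNIV x \<partial>m)" by simp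
    also have "\<dots> = emeasure \<nu> (UNIV \<times> {..r})" by (rule I[symmetric]) simp
    finally show ?thesis by (simp add: P.emeasure_finite)
  qed
  have P1: "AE x in m. G q x \<le> G r x" if "q \<le> r" for q r
  proof (rule AE_le_nn)
    fix A assume "A \<in> sets m"
    then have A: "A \<in> sets borel" by (simp add: sets_m)
    have "emeasure \<nu> (A \<times> {..q}) \<le> emeasure \<nu> (A \<times> {..r})"
      using that by (intro emeasure_mono rect A) auto
    then show "(\<integral>\<^sup>+x. G q x * indicator A x \<partial>m) \<le> (\<integral>\<^sup>+x. G r x * indicator A x \<partial>m)"
      by (simp add: I[OF A])
  qed (use fin[of r] in auto)
  have P2: "AE x in m. G r x \<le> 1" for r
  proof (rule AE_le_nn)
    fix A assume "A \<in> sets m"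
    then have A: "A \<in> sets borel" by (simp add: sets_m)
    have "emeasure \<nu> (A \<times> {..r}) \<le> emeasure \<nu> (A \<times> UNIV)"
      by (intro emeasure_mono rect A) auto
    then show "(\<integral>\<^sup>+x. G r x * indicator A x \<partial>m) \<le> (\<integral>\<^sup>+x. 1 * indicator A x \<partial>m)"
      using \<open>A \<in> sets m\<close> by (simp add: I[OF A] m_em[OF A])
  qed (simp_all add: M.emeasure_space_1)
  have P3: "AE x in m. (SUP n::nat. G (real n) x) = 1"
  proof -
    define H where "H x = (SUP n::nat. G (real n) x)" for x
    have H_m[measurable]: "H \<in> borel_measurable m" unfolding H_def by measurable
    have HA: "(\<integral>\<^sup>+x. H x * indicator A x \<partial>m) = emeasure m A" if A: "A \<in> sets borel" for A
    proof -
      note [measurable] = A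
      have "(\<integral>\<^sup>+x. H x * indicator A x \<partial>m) = (\<integral>\<^sup>+x. (SUP n::nat. G (real n) x * indicator A x) \<partial>m)"
        unfolding H_def by (intro nn_integral_cong) (simp add: SUP_mult_right_ennreal)
      also have "\<dots> = (SUP n::nat. (\<integral>\<^sup>+x. G (real n) x * indicator A x \<partial>m))"
      proof (rule nn_integral_monotone_convergence_SUP_AE)
        fix n :: nat
        show "AE x in m. G (real n) x * indicator A x \<le> G (real (Suc n)) x * indicator A x"
        proof -
          have "AE x in m. G (real n) x \<le> G (real (Suc n)) x" by (rule P1) simp
          then show ?thesis by eventually_elim (auto intro: mult_right_mono)
        qed
      qed measurable
      also have "\<dots> = (SUP n::nat. emeasure \<nu> (A \<times> {..real n}))" by (simp add: I[OF A])
      also have "\<dots> = emeasure \<nu> (\<Union>n::nat. A \<times> {..real n})"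
        by (rule SUP_emeasure_incseq) (auto simp: incseq_def intro!: rect A)
      also have "(\<Union>n::nat. A \<times> {..real n}) = A \<times> UNIV"
        by (auto simp: real_arch_simple)
      finally show ?thesis by (simp add: m_em[OF A])
    qed
    have a: "AE x in m. H x \<le> 1"
    proof -
      have "AE x in m. \<forall>n::nat. G (real n) x \<le> 1" using P2 by (simp add: AE_all_countable)
      then show ?thesis by eventually_elim (simp add: H_def SUP_le_iff)
    qed
    have b: "AE x in m. 1 \<le> H x"
    proof (rule AE_le_nn)
      fix A assume "A \<in> sets m"
      then have A: "A \<in> sets borel" by (simp add: sets_m)
      show "(\<integral>\<^sup>+x. 1 * indicator A x \<partial>m) \<le> (\<integral>\<^sup>+x. H x * indicator A x \<partial>m)"
        using \<open>A \<in> sets m\<close> by (simp add: HA[OF A])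
    next
      have "integral\<^sup>N m H = (\<integral>\<^sup>+x. H x * indicator UNIV x \<partial>m)" by simp
      also have "\<dots> = 1" using HA[of UNIV] M.emeasure_space_1 space_m by simp
      finally show "integral\<^sup>N m H \<noteq> \<infinity>" by simp
    qed simp_all
    from a b show ?thesis by eventually_elim (simp add: H_def)
  qed
  have P4: "AE x in m. (INF n::nat. G (- real n) x) = 0"
  proof -
    have "(\<integral>\<^sup>+x. (INF n::nat. G (- real n) x) \<partial>m) = (INF n::nat. integral\<^sup>N m (G (- real n)))"
    proof (rule nn_integral_monotone_convergence_INF_AE')
      fix n :: nat show "AE x in m. G (- real (Suc n)) x \<le> G (- real n) x" by (rule P1) simp
    next
      show "(\<integral>\<^sup>+ x. G (- real 0) x \<partial>m) < \<infinity>" using fin[of "- real 0"] by (simp add: less_top)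
    qed measurable
    also have "\<dots> = (INF n::nat. emeasure \<nu> (UNIV \<times> {..- real n}))"
      using I[of UNIV] by simp
    also have "\<dots> = emeasure \<nu> (\<Inter>n::nat. UNIV \<times> {..- real n})"
      by (rule INF_emeasure_decseq) (auto simp: decseq_def intro!: rect P.emeasure_finite)
    also have "(\<Inter>n::nat. UNIV \<times> {..- real n}) = ({}::('a\<times>real) set)"
    proof -
      have ex: "\<exists>n::nat. - real n < b" for b :: real
      proof -
        obtain n where "- b < real n" using reals_Archimedean2 by blast
        then show ?thesis by (intro exI[of _ n]) linarith
      qed
      show ?thesis
      proof (rule equals0I)
        fix p assume "p \<in> (\<Inter>n::nat. UNIV \<times> {..- real n})"
        then have le: "snd p \<le> - real n" for n by auto
        obtain n where "- real n < snd p" using ex by blast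
        with le[of n] show False by linarith
      qed
    qed
    finally have "(\<integral>\<^sup>+x. (INF n::nat. G (- real n) x) \<partial>m) = 0" by simp
    then show ?thesis by (subst (asm) nn_integral_0_iff_AE) measurable
  qed
  define S where "S = {x. (\<forall>q\<in>\<rat>. \<forall>r\<in>\<rat>. q \<le> r \<longrightarrow> G q x \<le> G r x) \<and> (\<forall>q\<in>\<rat>. G q x \<le> 1)
     \<and> (SUP n::nat. G (real n) x) = 1 \<and> (INF n::nat. G (- real n) x) = 0}"
  have S_sets[measurable]: "S \<in> sets borel"
  proof -
    have eq: "S = {x. (\<forall>q::rat. \<forall>r::rat. of_rat q \<le> (of_rat r::real) \<longrightarrow> G (of_rat q) x \<le> G (of_rat r) x) \<and>
       (\<forall>q::rat. G (of_rat q) x \<le> 1) \<and> (SUP n::nat. G (real n) x) = 1 \<and> (INF n::nat. G (- real n) x) = 0}"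
      unfolding S_def Rats_def by auto
    have "Measurable.pred borel (\<lambda>x. (\<forall>q::rat. \<forall>r::rat. of_rat q \<le> (of_rat r::real) \<longrightarrow> G (of_rat q) x \<le> G (of_rat r) x) \<and>
       (\<forall>q::rat. G (of_rat q) x \<le> 1) \<and> (SUP n::nat. G (real n) x) = 1 \<and> (INF n::nat. G (- real n) x) = 0)"
      by measurable
    then show ?thesis unfolding eq pred_def by simp
  qed
  have AE_S: "AE x in m. x \<in> S"
  proof -
    have a: "AE x in m. \<forall>q\<in>\<rat>. \<forall>r\<in>\<rat>. q \<le> r \<longrightarrow> G q x \<le> G r x"
      by (subst AE_ball_countable[OF countable_rat], intro ballI,
          subst AE_ball_countable[OF countable_rat], intro ballI AE_impI P1)
    have b: "AE x in m. \<forall>q\<in>\<rat>. G q x \<le> 1"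
      by (subst AE_ball_countable[OF countable_rat]) (intro ballI P2)
    from a b P3 P4 show ?thesis by eventually_elim (simp add: S_def)
  qed
  define F where "F x r = (INF q\<in>{q\<in>\<rat>. r < q}. G q x)" for x r
  define qs where "qs r n = real_of_int (floor (r * 2^n) + 1) / 2^n" for r :: real and n :: nat
  have qs: "qs r n \<in> \<rat>" "r < qs r n" "qs r n \<le> r + 1/2^n" "qs r (Suc n) \<le> qs r n" for r n
  proof -
    show "qs r n \<in> \<rat>" unfolding qs_def by (intro Rats_divide Rats_power Rats_of_int) simp
    have p: "(0::real) < 2^n" by simp
    have "r * 2^n < real_of_int (floor (r * 2^n) + 1)" by linarith
    then show "r < qs r n" unfolding qs_def using p by (simp add: pos_less_divide_eq)
    have "real_of_int (floor (r * 2^n) + 1) \<le> (r + 1/2^n) * 2^n" using p by (simp add: algebra_simps)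
    then show "qs r n \<le> r + 1/2^n" unfolding qs_def using p by (simp add: pos_divide_le_eq)
    have e: "r * 2^(Suc n) = 2 * (r * 2^n)" by simp
    have "floor (r * 2^(Suc n)) \<le> 2 * floor (r * 2^n) + 1"
      unfolding e using floor_double_cases[of "r * 2^n"] by auto
    then have "real_of_int (floor (r * 2^(Suc n))) \<le> real_of_int (2 * floor (r * 2^n) + 1)"
      by (simp only: of_int_le_iff)
    then have "real_of_int (floor (r * 2^(Suc n)) + 1) \<le> 2 * real_of_int (floor (r * 2^n) + 1)"
      by (simp; linarith)
    then have "real_of_int (floor (r * 2^(Suc n)) + 1) / 2^(Suc n) \<le> 2 * real_of_int (floor (r * 2^n) + 1) / 2^(Suc n)"
      by (rule divide_right_mono) simp
    moreover have h: "2 * X / 2^(Suc n) = X / (2::real)^n" for X by simp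
    ultimately have "real_of_int (floor (r * 2^(Suc n)) + 1) / 2^(Suc n) \<le> real_of_int (floor (r * 2^n) + 1) / 2^n"
      by (simp only: h)
    then show "qs r (Suc n) \<le> qs r n" unfolding qs_def .
  qed
  have Smono: "G q x \<le> G r x" if "x \<in> S" "q \<in> \<rat>" "r \<in> \<rat>" "q \<le> r" for x q r
    using that unfolding S_def by auto
  have Sle1: "G q x \<le> 1" if "x \<in> S" "q \<in> \<rat>" for x q
    using that unfolding S_def by auto
  have F_qs: "F x r = (INF n. G (qs r n) x)" if x: "x \<in> S" for x r
  proof (rule antisym)
    show "F x r \<le> (INF n. G (qs r n) x)"
      unfolding F_def by (intro INF_greatest INF_lower) (simp add: qs)
    show "(INF n. G (qs r n) x) \<le> F x r"
      unfolding F_def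
    proof (intro INF_greatest)
      fix q assume q: "q \<in> {q \<in> \<rat>. r < q}"
      obtain n where n: "(1/2::real)^n < q - r" using real_arch_pow_inv[of "q - r" "1/2"] q by auto
      then have "qs r n < q" using qs(3)[of r n] by (simp add: power_one_over)
      then have "G (qs r n) x \<le> G q x" using q by (intro Smono x qs) auto
      then show "(INF n. G (qs r n) x) \<le> G q x" by (rule INF_lower2[OF UNIV_I])
    qed
  qed
  have F_le1: "F x r \<le> 1" if x: "x \<in> S" for x r
  proof -
    have "F x r \<le> G (qs r 0) x" unfolding F_qs[OF x] by (rule INF_lower) simp
    also have "\<dots> \<le> 1" by (intro Sle1 x qs)
    finally show ?thesis .
  qed
  have F_ge: "G q x \<le> F x r" if x: "x \<in> S" "q \<in> \<rat>" "q \<le> r" for x q r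
    unfolding F_def by (intro INF_greatest Smono x) (use that in auto)
  have F_le: "F x r \<le> G q x" if "q \<in> \<rat>" "r < q" for x q r
    unfolding F_def by (rule INF_lower) (use that in auto)
  define Fr where "Fr x r = enn2real (F x r)" for x r
  have Fr_F: "ennreal (Fr x r) = F x r" if x: "x \<in> S" for x r
  proof -
    have "F x r \<noteq> \<top>" using F_le1[OF x, of r] by (auto simp: top_unique)
    then show ?thesis unfolding Fr_def by (metis ennreal_enn2real less_top)
  qed
  have Fr_mono: "Fr x a \<le> Fr x b" if x: "x \<in> S" and ab: "a \<le> b" for x a b
  proof -
    have "F x a \<le> F x b" unfolding F_def by (rule INF_superset_mono) (use ab in auto)
    moreover have "F x b < \<top>" using F_le1[OF x, of b] le_less_trans[of "F x b" 1 \<top>] by simp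
    ultimately show ?thesis unfolding Fr_def by (rule enn2real_mono)
  qed
  have Fr_nn: "0 \<le> Fr x r" for x r unfolding Fr_def by simp
  have Fr_rc: "continuous (at_right a) (Fr x)" if x: "x \<in> S" for x a
  proof -
    have "\<exists>\<delta>>0. Fr x (a + \<delta>) - Fr x a < \<epsilon>" if e: "\<epsilon> > 0" for \<epsilon>
    proof -
      have "F x a < ennreal (Fr x a + \<epsilon>)"
        unfolding Fr_F[OF x, symmetric] using e Fr_nn[of x a] by (simp add: ennreal_less_iff)
      then obtain q where q: "q \<in> \<rat>" "a < q" "G q x < ennreal (Fr x a + \<epsilon>)"
        unfolding F_def INF_less_iff by auto
      have "F x (a + (q - a)/2) \<le> G q x" by (rule F_le[OF q(1)]) (use q(2) in \<open>simp add: field_simps\<close>)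
      then have "ennreal (Fr x (a + (q - a)/2)) < ennreal (Fr x a + \<epsilon>)"
        using q(3) Fr_F[OF x] by (metis order.strict_trans1)
      then have "Fr x (a + (q - a)/2) < Fr x a + \<epsilon>"
        using Fr_nn by (subst (asm) ennreal_less_iff) auto
      then show ?thesis using q(2) by (intro exI[of _ "(q - a)/2"]) auto
    qed
    then show ?thesis by (subst continuous_at_right_real_increasing) (auto intro: Fr_mono[OF x])
  qed
  have Fr_le1: "Fr x r \<le> 1" if x: "x \<in> S" for x r
    using F_le1[OF x, of r] Fr_F[OF x, of r] by (metis ennreal_le_1)
  have Fr_top: "(Fr x \<longlongrightarrow> 1) at_top" if x: "x \<in> S" for x
  proof (rule order_tendstoI)
    fix a :: real assume "1 < a"
    then have "Fr x r < a" for r using Fr_le1[OF x, of r] by linarith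
    then show "eventually (\<lambda>r. Fr x r < a) at_top" by (intro always_eventually) simp
  next
    fix a :: real assume a: "a < 1"
    have "ennreal a < 1" using a by simp
    also have "1 = (SUP n::nat. G (real n) x)" using x unfolding S_def by simp
    finally obtain n :: nat where n: "ennreal a < G (real n) x" unfolding less_SUP_iff by auto
    have "a < Fr x r" if r: "real n \<le> r" for r
    proof -
      have "G (real n) x \<le> F x r" by (rule F_ge[OF x]) (use r in auto)
      then have "ennreal a < ennreal (Fr x r)" using n Fr_F[OF x] by (metis order.strict_trans2)
      then show ?thesis using Fr_nn[of x r] by (cases "0 \<le> a") (auto simp: ennreal_less_iff)
    qed
    then show "eventually (\<lambda>r. a < Fr x r) at_top" unfolding eventually_at_top_linorder by blast
  qed
  have Fr_bot: "(Fr x \<longlongrightarrow> 0) at_bot" if x: "x \<in> S" for x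
  proof (rule order_tendstoI)
    fix a :: real assume "a < 0"
    then have "a < Fr x r" for r using Fr_nn[of x r] by linarith
    then show "eventually (\<lambda>r. a < Fr x r) at_bot" by (intro always_eventually) simp
  next
    fix a :: real assume a: "0 < a"
    have "(INF n::nat. G (- real n) x) < ennreal a" using x a unfolding S_def by simp
    then obtain n :: nat where n: "G (- real n) x < ennreal a" unfolding INF_less_iff by auto
    have "Fr x r < a" if r: "r \<le> - real n - 1" for r
    proof -
      have "F x r \<le> G (- real n) x" by (rule F_le) (use r in auto)
      then have "ennreal (Fr x r) < ennreal a" using n Fr_F[OF x] by (metis order.strict_trans1)
      then show ?thesis using Fr_nn by (subst (asm) ennreal_less_iff) auto
    qed
    then show "eventually (\<lambda>r. Fr x r < a) at_bot" unfolding eventually_at_bot_linorder by blast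
  qed
  define \<kappa> where "\<kappa> x = (if x \<in> S then interval_measure (Fr x) else return borel 0)" for x
  have \<kappa>_prob: "prob_space (\<kappa> x)" for x
  proof (cases "x \<in> S")
    case True
    then interpret real_distribution "interval_measure (Fr x)"
      by (intro real_distribution_interval_measure Fr_mono Fr_rc Fr_bot Fr_top) auto
    show ?thesis using True unfolding \<kappa>_def by (simp add: prob_space_axioms)
  next
    case False then show ?thesis unfolding \<kappa>_def by (simp add: prob_space_return)
  qed
  have \<kappa>_sets: "sets (\<kappa> x) = sets borel" for x
    unfolding \<kappa>_def by (simp add: sets_interval_measure)
  have \<kappa>_Iic: "emeasure (\<kappa> x) {..r} = (if x \<in> S then F x r else indicator {..r} 0)" for x r
  proof (cases "x \<in> S")
    case True
    have "emeasure (interval_measure (Fr x)) {..r} = Fr x r"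
      by (rule emeasure_interval_measure_Iic) (use True Fr_mono Fr_rc Fr_bot in auto)
    then show ?thesis using True Fr_F[OF True] unfolding \<kappa>_def by simp
  next
    case False then show ?thesis unfolding \<kappa>_def by simp
  qed
  have F_meas: "(\<lambda>x. F x r) \<in> borel_measurable borel" for r
    unfolding F_def by (rule borel_measurable_INF) (auto intro: countable_subset[OF _ countable_rat])
  have \<kappa>_meas: "\<kappa> \<in> borel \<rightarrow>\<^sub>M prob_algebra borel"
  proof (rule measurable_prob_algebra_generated[where \<Omega>=UNIV and G="range atMost"])
    show "sets (borel::real measure) = sigma_sets UNIV (range atMost)"
      by (subst borel_eq_atMost) simp
    show "Int_stable (range (atMost::real \<Rightarrow> real set))"
      by (auto simp: Int_stable_def intro!: image_eqI[of _ _ "min _ _"])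
    show "range atMost \<subseteq> Pow (UNIV::real set)" by simp
    show "prob_space (\<kappa> a)" for a by (rule \<kappa>_prob)
    show "sets (\<kappa> a) = sets borel" for a by (rule \<kappa>_sets)
    fix A :: "real set" assume "A \<in> range atMost"
    then obtain r where A: "A = {..r}" by auto
    have "(\<lambda>x. if x \<in> S then F x r else indicator {..r} (0::real)) \<in> borel_measurable borel"
      using F_meas[of r] by measurable
    then show "(\<lambda>a. emeasure (\<kappa> a) A) \<in> borel_measurable borel"
      unfolding A \<kappa>_Iic .
  qed
  define K where "K x = distr (\<kappa> x) borel (\<lambda>y. (x,y))" for x
  have pair_m: "(\<lambda>y. (x,y)) \<in> (borel::real measure) \<rightarrow>\<^sub>M (borel::('a\<times>real) measure)" for x
  proof -
    have "(\<lambda>y. (x,y)) \<in> (borel::real measure) \<rightarrow>\<^sub>M ((borel::'a measure) \<Otimes>\<^sub>M (borel::real measure))" by measurable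
    then show ?thesis unfolding borel_prod .
  qed
  have K_meas: "K \<in> m \<rightarrow>\<^sub>M prob_algebra borel"
    unfolding K_def
  proof (rule measurable_distr_prob_space2)
    show "\<kappa> \<in> m \<rightarrow>\<^sub>M prob_algebra borel" using \<kappa>_meas by (simp add: measurable_cong_sets[OF sets_m refl])
    have "(\<lambda>p. p) \<in> ((borel::'a measure) \<Otimes>\<^sub>M (borel::real measure)) \<rightarrow>\<^sub>M (borel::('a\<times>real) measure)"
      unfolding borel_prod by simp
    then show "(\<lambda>(x, y). (x, y)) \<in> m \<Otimes>\<^sub>M borel \<rightarrow>\<^sub>M (borel::('a\<times>real) measure)"
      by (simp add: measurable_cong_sets[OF sets_pair_measure_cong[OF sets_m refl] refl] case_prod_beta)
  qed
  have sets_K: "sets (K x) = sets borel" for x unfolding K_def by simp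
  have rectB: "A \<times> B \<in> sets (borel::('a\<times>real) measure)" if "A \<in> sets borel" "B \<in> sets borel" for A :: "'a set" and B :: "real set"
    using rect[OF that] by (simp add: sets_nu)
  have space_kappa: "space (\<kappa> x) = UNIV" for x using sets_eq_imp_space_eq[OF \<kappa>_sets[of x]] by simp
  have Kem: "emeasure (K x) (A \<times> {..r}) = indicator A x * emeasure (\<kappa> x) {..r}" if A: "A \<in> sets borel" for x A r
  proof -
    have "emeasure (K x) (A \<times> {..r}) = emeasure (\<kappa> x) ((\<lambda>y. (x,y)) -` (A \<times> {..r}) \<inter> space (\<kappa> x))"
      unfolding K_def
      by (rule emeasure_distr) (use pair_m[of x] rectB[OF A] in \<open>simp_all add: measurable_cong_sets[OF \<kappa>_sets refl]\<close>)
    also have "(\<lambda>y. (x,y)) -` (A \<times> {..r}) \<inter> space (\<kappa> x) = (if x \<in> A then {..r} else {})"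
      by (auto simp: space_kappa)
    finally show ?thesis by (simp split: split_indicator)
  qed
  have space_m_ne: "space m \<noteq> {}" by (simp add: space_m)
  have eqE: "emeasure \<nu> (A \<times> {..r}) = emeasure (m \<bind> K) (A \<times> {..r})" if A: "A \<in> sets borel" for A r
  proof -
    note [measurable] = A
    have "emeasure (m \<bind> K) (A \<times> {..r}) = (\<integral>\<^sup>+x. emeasure (K x) (A \<times> {..r}) \<partial>m)"
      by (rule emeasure_bind[OF space_m_ne measurable_prob_algebraD[OF K_meas] rectB[OF A]]) simp
    also have "\<dots> = (\<integral>\<^sup>+x. (INF n. G (qs r n) x * indicator A x) \<partial>m)"
    proof (rule nn_integral_cong_AE)
      show "AE x in m. emeasure (K x) (A \<times> {..r}) = (INF n. G (qs r n) x * indicator A x)"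
        using AE_S
      proof eventually_elim
        case (elim x)
        have "emeasure (K x) (A \<times> {..r}) = indicator A x * (INF n. G (qs r n) x)"
          using Kem[OF A] \<kappa>_Iic elim F_qs[OF elim] by simp
        also have "\<dots> = (INF n. G (qs r n) x * indicator A x)"
          by (simp split: split_indicator)
        finally show ?case .
      qed
    qed
    also have "\<dots> = (INF n. (\<integral>\<^sup>+x. G (qs r n) x * indicator A x \<partial>m))"
    proof (rule nn_integral_monotone_convergence_INF_AE')
      fix n
      have "AE x in m. G (qs r (Suc n)) x \<le> G (qs r n) x" by (rule P1) (rule qs)
      then show "AE x in m. G (qs r (Suc n)) x * indicator A x \<le> G (qs r n) x * indicator A x"
        by eventually_elim (auto intro: mult_right_mono)
    next
      show "(\<integral>\<^sup>+x. G (qs r 0) x * indicator A x \<partial>m) < \<infinity>"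
        using I[OF A, of "qs r 0"] P.emeasure_finite[of "A \<times> {..qs r 0}"] by (simp add: less_top)
    qed measurable
    also have "\<dots> = (INF n. emeasure \<nu> (A \<times> {..qs r n}))" by (simp add: I[OF A])
    also have "\<dots> = emeasure \<nu> (\<Inter>n. A \<times> {..qs r n})"
    proof (rule INF_emeasure_decseq)
      show "range (\<lambda>n. A \<times> {..qs r n}) \<subseteq> sets \<nu>" by (auto intro!: rect A)
      show "decseq (\<lambda>n. A \<times> {..qs r n})"
        by (rule decseq_SucI) (auto intro: order_trans[OF _ qs(4)])
    qed (simp add: P.emeasure_finite)
    also have "(\<Inter>n. A \<times> {..qs r n}) = A \<times> {..r}"
    proof (intro equalityI subsetI)
      fix p assume p: "p \<in> (\<Inter>n. A \<times> {..qs r n})"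
      have "snd p \<le> r"
      proof (rule ccontr)
        assume "\<not> snd p \<le> r"
        then obtain n where n: "(1/2::real)^n < snd p - r" using real_arch_pow_inv[of "snd p - r" "1/2"] by auto
        then have "qs r n < snd p" using qs(3)[of r n] by (simp add: power_one_over)
        moreover have "p \<in> A \<times> {..qs r n}" using p by blast
        ultimately show False by (cases p) auto
      qed
      with p show "p \<in> A \<times> {..r}" by (cases p) auto
    next
      fix p assume "p \<in> A \<times> {..r}"
      then show "p \<in> (\<Inter>n. A \<times> {..qs r n})" using qs(2)[of r] by (cases p) (auto intro: order_trans less_imp_le)
    qed
    finally show ?thesis ..
  qed
  have "\<nu> = m \<bind> K"
  proof (rule measure_eqI_generator_eq[where \<Omega>=UNIV and E="{A \<times> {..(r::real)} | A r. A \<in> sets (borel::'a measure)}"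
        and A="\<lambda>i. UNIV \<times> {..real i}"])
    show "Int_stable {A \<times> {..(r::real)} | A r. A \<in> sets (borel::'a measure)}"
    proof (rule Int_stableI)
      fix X Y assume "X \<in> {A \<times> {..(r::real)} | A r. A \<in> sets (borel::'a measure)}" "Y \<in> {A \<times> {..(r::real)} | A r. A \<in> sets (borel::'a measure)}"
      then obtain A r B q where "X = A \<times> {..r}" "Y = B \<times> {..q}" "A \<in> sets borel" "B \<in> sets borel" by auto
      then show "X \<inter> Y \<in> {A \<times> {..(r::real)} | A r. A \<in> sets (borel::'a measure)}"
        by (intro CollectI exI[of _ "A \<inter> B"] exI[of _ "min r q"]) auto
    qed
    show "{A \<times> {..(r::real)} | A r. A \<in> sets (borel::'a measure)} \<subseteq> Pow UNIV" by simp
    show "emeasure \<nu> X = emeasure (m \<bind> K) X" if "X \<in> {A \<times> {..(r::real)} | A r. A \<in> sets (borel::'a measure)}" for X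
      using that eqE by auto
    have gen: "sets (borel::('a\<times>real) measure) = sigma_sets UNIV {A \<times> {..(r::real)} | A r. A \<in> sets (borel::'a measure)}"
    proof -
      have s1: "sets (sigma UNIV (sets (borel::'a measure))) = sets (borel::'a measure)"
        using sets.sigma_sets_eq[of "borel::'a measure"] by simp
      have s2: "sets (sigma UNIV (range (atMost::real \<Rightarrow> real set))) = sets (borel::real measure)"
        by (metis borel_eq_atMost)
      have "sets ((borel::'a measure) \<Otimes>\<^sub>M (borel::real measure)) =
          sets (sigma UNIV (sets (borel::'a measure)) \<Otimes>\<^sub>M sigma UNIV (range (atMost::real \<Rightarrow> real set)))"
        by (rule sets_pair_measure_cong[OF s1[symmetric] s2[symmetric]])
      also have "\<dots> = sets (sigma (UNIV \<times> UNIV) {a \<times> b | a b. a \<in> sets (borel::'a measure) \<and> b \<in> range (atMost::real \<Rightarrow> real set)})"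
      proof (subst sigma_prod)
        show "\<exists>E\<subseteq>sets (borel::'a measure). countable E \<and> UNIV = \<Union>E"
          by (intro exI[of _ "{UNIV}"]) auto
        show "\<exists>E\<subseteq>range (atMost::real \<Rightarrow> real set). countable E \<and> UNIV = \<Union>E"
          by (intro exI[of _ "range (\<lambda>n::nat. {..real n})"]) (auto simp: real_arch_simple)
      qed auto
      also have "\<dots> = sigma_sets UNIV {a \<times> b | a b. a \<in> sets (borel::'a measure) \<and> b \<in> range (atMost::real \<Rightarrow> real set)}"
        by (subst sets_measure_of) auto
      finally have "sets ((borel::'a measure) \<Otimes>\<^sub>M (borel::real measure)) =
          sigma_sets UNIV {a \<times> b | a b. a \<in> sets (borel::'a measure) \<and> b \<in> range (atMost::real \<Rightarrow> real set)}" .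
      moreover have "{a \<times> b | a b. a \<in> sets borel \<and> b \<in> range atMost} = {A \<times> {..(r::real)} | A r. A \<in> sets (borel::'a measure)}"
        by blast
      ultimately show ?thesis unfolding borel_prod by simp
    qed
    show "sets \<nu> = sigma_sets UNIV {A \<times> {..(r::real)} | A r. A \<in> sets (borel::'a measure)}"
      by (simp add: sets_nu gen)
    show "sets (m \<bind> K) = sigma_sets UNIV {A \<times> {..(r::real)} | A r. A \<in> sets (borel::'a measure)}"
      by (subst sets_bind[OF sets_K space_m_ne]) (simp add: gen)
    show "range (\<lambda>i. UNIV \<times> {..real i}) \<subseteq> {A \<times> {..(r::real)} | A r. A \<in> sets (borel::'a measure)}" by auto
    show "(\<Union>i. UNIV \<times> {..real i}) = (UNIV::('a\<times>real) set)"
      by (auto simp: real_arch_simple)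
    show "emeasure \<nu> (UNIV \<times> {..real i}) \<noteq> \<infinity>" for i by (simp add: P.emeasure_finite)
  qed
  moreover have "K \<in> borel \<rightarrow>\<^sub>M prob_algebra borel"
    using K_meas by (simp add: measurable_cong_sets[OF sets_m refl])
  ultimately show ?thesis using \<kappa>_meas unfolding m_def K_def by blast
qed

lemma space_curves[simp]: "space (curves :: (real \<Rightarrow> 'b::real_normed_vector) measure) = C01"
  unfolding curves_def by (simp add: space_measure_of_conv)

lemma sets_curves: "sets (curves :: (real \<Rightarrow> 'b::real_normed_vector) measure) =
    sigma_sets C01 {(\<lambda>w. w t) -` B \<inter> C01 | t B. t \<in> {0..1} \<and> B \<in> sets borel}"
  unfolding curves_def by (rule sets_measure_of) auto

lemma ev_eq: "ev t = (\<lambda>w. w t)" by (rule ext) (simp add: ev_def)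

lemma ev_meas: assumes "t \<in> {0..1}"
  shows "ev t \<in> (curves :: (real \<Rightarrow> 'b::real_normed_vector) measure) \<rightarrow>\<^sub>M borel"
proof (rule measurableI)
  show "ev t x \<in> space borel" for x by simp
  fix B :: "'b set" assume "B \<in> sets borel"
  then have "(\<lambda>w. w t) -` B \<inter> C01 \<in> {(\<lambda>w. w t) -` B \<inter> C01 | t B. t \<in> {0..1} \<and> B \<in> sets (borel::'b measure)}"
    using assms by blast
  then show "ev t -` B \<inter> space curves \<in> sets (curves :: (real \<Rightarrow> 'b) measure)"
    unfolding sets_curves space_curves ev_eq by (rule sigma_sets.Basic)
qed

lemma p1_meas: "p1 \<in> (curves :: (real \<Rightarrow> 'a::real_normed_vector \<times> 'b::real_normed_vector) measure) \<rightarrow>\<^sub>M curves"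
proof -
  have "p1 \<in> (curves :: (real \<Rightarrow> 'a \<times> 'b) measure) \<rightarrow>\<^sub>M
     sigma C01 {(\<lambda>w. w t) -` B \<inter> C01 | t B. t \<in> {0..1} \<and> B \<in> sets (borel::'a measure)}"
  proof (rule measurable_measure_of)
    show "{(\<lambda>w. w t) -` B \<inter> C01 | t B. t \<in> {0..1} \<and> B \<in> sets (borel::'a measure)} \<subseteq> Pow C01" by auto
    have p1C: "p1 w \<in> C01" if "w \<in> C01" for w :: "real \<Rightarrow> 'a \<times> 'b"
      using that unfolding C01_def p1_def by (auto intro: continuous_on_fst)
    then show "p1 \<in> space (curves :: (real \<Rightarrow> 'a \<times> 'b) measure) \<rightarrow> C01" by auto
    fix A assume "A \<in> {(\<lambda>w. w t) -` B \<inter> C01 | t B. t \<in> {0..1} \<and> B \<in> sets (borel::'a measure)}"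
    then obtain t B where A: "A = (\<lambda>w. w t) -` B \<inter> C01" and t: "t \<in> {0..1}" and B: "B \<in> sets (borel::'a measure)"
      by auto
    have fm: "(fst :: 'a \<times> 'b \<Rightarrow> 'a) \<in> borel_measurable borel"
      by (rule borel_measurable_continuous_onI) (intro continuous_intros)
    have fB: "fst -` B \<in> sets (borel::('a \<times> 'b) measure)"
      using measurable_sets[OF fm B] by simp
    have "p1 -` A \<inter> space curves = (\<lambda>w. w t) -` (fst -` B) \<inter> (C01 :: (real \<Rightarrow> 'a \<times> 'b) set)"
      using p1C unfolding A by (auto simp: p1_def)
    also have "\<dots> \<in> sets (curves :: (real \<Rightarrow> 'a \<times> 'b) measure)"
      unfolding sets_curves by (rule sigma_sets.Basic) (use t fB in blast)
    finally show "p1 -` A \<inter> space curves \<in> sets (curves :: (real \<Rightarrow> 'a \<times> 'b) measure)" .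
  qed
  then show ?thesis unfolding curves_def[symmetric] .
qed

lemma pair_meas: "(\<lambda>y. (x,y)) \<in> (borel::'b::second_countable_topology measure) \<rightarrow>\<^sub>M (borel::('a::second_countable_topology \<times> 'b) measure)"
proof -
  have "(\<lambda>y. (x,y)) \<in> (borel::'b measure) \<rightarrow>\<^sub>M ((borel::'a measure) \<Otimes>\<^sub>M (borel::'b measure))" by measurable
  then show ?thesis unfolding borel_prod .
qed

lemma plan_nn:
  fixes \<mu> :: "'a::euclidean_space measure" and \<psi> :: "'a \<Rightarrow> 'a measure"
  assumes sm: "sets \<mu> = sets borel" and psi: "\<psi> \<in> borel \<rightarrow>\<^sub>M prob_algebra borel"
    and f: "f \<in> borel_measurable (borel::('a \<times> 'a) measure)"
  shows "(\<integral>\<^sup>+p. f p \<partial>plan \<mu> \<psi>) = (\<integral>\<^sup>+x. \<integral>\<^sup>+z. f (x,z) \<partial>\<psi> x \<partial>\<mu>)"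
proof -
  have psim: "\<psi> \<in> \<mu> \<rightarrow>\<^sub>M prob_algebra borel" using psi by (simp add: measurable_cong_sets[OF sm refl])
  have "(\<lambda>p. p) \<in> ((borel::'a measure) \<Otimes>\<^sub>M (borel::'a measure)) \<rightarrow>\<^sub>M (borel::('a\<times>'a) measure)"
    unfolding borel_prod by simp
  then have pid: "(\<lambda>(x, z). (x, z)) \<in> \<mu> \<Otimes>\<^sub>M borel \<rightarrow>\<^sub>M (borel::('a\<times>'a) measure)"
    by (simp add: measurable_cong_sets[OF sets_pair_measure_cong[OF sm refl] refl] case_prod_beta)
  have Km: "(\<lambda>x. distr (\<psi> x) borel (\<lambda>z. (x,z))) \<in> \<mu> \<rightarrow>\<^sub>M prob_algebra borel"
    by (rule measurable_distr_prob_space2[OF psim pid])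
  have "(\<integral>\<^sup>+p. f p \<partial>plan \<mu> \<psi>) = (\<integral>\<^sup>+x. \<integral>\<^sup>+y. f y \<partial>distr (\<psi> x) borel (\<lambda>z. (x,z)) \<partial>\<mu>)"
    unfolding plan_def by (rule nn_integral_bind[OF f measurable_prob_algebraD[OF Km]])
  also have "\<dots> = (\<integral>\<^sup>+x. \<integral>\<^sup>+z. f (x,z) \<partial>\<psi> x \<partial>\<mu>)"
  proof (rule nn_integral_cong)
    fix x
    have "\<psi> x \<in> space (prob_algebra borel)" using measurable_space[OF psi, of x] by simp
    then have sx: "sets (\<psi> x) = sets borel" by (simp add: space_prob_algebra)
    have pm: "(\<lambda>z. (x,z)) \<in> \<psi> x \<rightarrow>\<^sub>M (borel::('a\<times>'a) measure)"
      using pair_meas by (simp add: measurable_cong_sets[OF sx refl])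
    show "(\<integral>\<^sup>+y. f y \<partial>distr (\<psi> x) borel (\<lambda>z. (x,z))) = (\<integral>\<^sup>+z. f (x,z) \<partial>\<psi> x)"
      by (rule nn_integral_distr[OF pm]) (simp add: f)
  qed
  finally show ?thesis .
qed


theorem mainTheorem1:
  fixes \<mu> :: "'a::euclidean_space measure" and \<psi> :: "'a \<Rightarrow> 'a measure"
    and \<eta> :: "(real \<Rightarrow> 'a) measure" and \<Psi> :: "(real \<Rightarrow> 'a \<times> 'a) measure"
  assumes "\<mu> \<in> P2"
    and "\<psi> \<in> Tan \<mu>"
    and "\<eta> \<in> space (prob_algebra curves)"
    and "distr \<eta> borel (ev 0) = \<mu>"
    and "parallel_transport \<mu> \<psi> \<eta> \<Psi>"
  shows "\<forall>t\<in>{0..1}. \<exists>\<psi>t. \<psi>t \<in> Tan (distr \<eta> borel (ev t)) \<and>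
            distr \<Psi> borel (ev t) = plan (distr \<eta> borel (ev t)) \<psi>t"
proof (intro ballI)
  fix t :: real assume t: "t \<in> {0..1}"
  have t0: "(0::real) \<in> {0..1}" by simp
  note PT = assms(5)[unfolded parallel_transport_def]
  have PsiS: "\<Psi> \<in> space (prob_algebra curves)" and C1yS: "C1y \<in> sets \<Psi>" and C1y1: "emeasure \<Psi> C1y = 1"
    and Pp1: "distr \<Psi> curves p1 = \<eta>" and Pd2: "distr \<Psi> curves d2 = return curves (\<lambda>_. 0)"
    and P0: "distr \<Psi> borel (ev 0) = plan \<mu> \<psi>" using PT by auto
  have sets_Psi: "sets \<Psi> = sets curves" and prob_Psi: "prob_space \<Psi>"
    using PsiS by (auto simp: space_prob_algebra)
  interpret Ps: prob_space \<Psi> by (rule prob_Psi)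
  have space_Psi: "space \<Psi> = C01" using sets_eq_imp_space_eq[OF sets_Psi] by simp
  have evt: "ev t \<in> \<Psi> \<rightarrow>\<^sub>M (borel::('a\<times>'a) measure)"
    using ev_meas[OF t] by (simp add: measurable_cong_sets[OF sets_Psi refl])
  have ev0: "ev 0 \<in> \<Psi> \<rightarrow>\<^sub>M (borel::('a\<times>'a) measure)"
    using ev_meas[OF t0] by (simp add: measurable_cong_sets[OF sets_Psi refl])
  have p1m: "p1 \<in> \<Psi> \<rightarrow>\<^sub>M (curves :: (real \<Rightarrow> 'a) measure)"
    using p1_meas by (simp add: measurable_cong_sets[OF sets_Psi refl])
  have sets_mu: "sets \<mu> = sets borel" using assms(1) by (simp add: P2_def space_prob_algebra)
  have psim: "\<psi> \<in> borel \<rightarrow>\<^sub>M prob_algebra borel" using assms(2) by (simp add: Tan_def)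
  have fst_b: "fst \<in> (borel::('a\<times>'a) measure) \<rightarrow>\<^sub>M (borel::'a measure)"
    using measurable_fst[of "borel::'a measure" "borel::'a measure"] by (simp add: borel_prod)
  have fst_b': "fst \<in> (borel::('a\<times>real) measure) \<rightarrow>\<^sub>M (borel::'a measure)"
    using measurable_fst[of "borel::'a measure" "borel::real measure"] by (simp add: borel_prod)
  have snd_b: "snd \<in> (borel::('a\<times>'a) measure) \<rightarrow>\<^sub>M (borel::'a measure)"
    using measurable_snd[of "borel::'a measure" "borel::'a measure"] by (simp add: borel_prod)
  define \<nu>t where "\<nu>t = distr \<Psi> borel (ev t)"
  define \<eta>t where "\<eta>t = distr \<eta> borel (ev t)"
  have \<eta>t_eq: "\<eta>t = distr \<nu>t borel fst"
  proof -
    have "\<eta>t = distr (distr \<Psi> curves p1) borel (ev t)" unfolding \<eta>t_def Pp1 ..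
    also have "\<dots> = distr \<Psi> borel (ev t \<circ> p1)" by (rule distr_distr[OF ev_meas[OF t] p1m])
    also have "ev t \<circ> p1 = fst \<circ> ev t" by (auto simp: ev_def p1_def)
    also have "distr \<Psi> borel (fst \<circ> ev t) = distr \<nu>t borel fst"
      unfolding \<nu>t_def by (rule distr_distr[OF fst_b evt, symmetric])
    finally show ?thesis .
  qed
  have \<nu>t_prob: "\<nu>t \<in> space (prob_algebra borel)"
    unfolding \<nu>t_def space_prob_algebra by (simp add: Ps.prob_space_distr evt)
  then have sets_\<nu>t: "sets \<nu>t = sets borel" and prob_\<nu>t: "prob_space \<nu>t" by (auto simp: space_prob_algebra)
  define h :: "'a\<times>'a \<Rightarrow> 'a\<times>real" where "h p = (fst p, enc (snd p))" for p
  define h' :: "'a\<times>real \<Rightarrow> 'a\<times>'a" where "h' p = (fst p, dec (snd p))" for p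
  have hm: "h \<in> borel \<rightarrow>\<^sub>M borel"
  proof -
    have "h \<in> (borel::'a measure) \<Otimes>\<^sub>M (borel::'a measure) \<rightarrow>\<^sub>M (borel::'a measure) \<Otimes>\<^sub>M (borel::real measure)"
      unfolding h_def by measurable
    then show ?thesis unfolding borel_prod .
  qed
  have h'm: "h' \<in> borel \<rightarrow>\<^sub>M borel"
  proof -
    have "h' \<in> (borel::'a measure) \<Otimes>\<^sub>M (borel::real measure) \<rightarrow>\<^sub>M (borel::'a measure) \<Otimes>\<^sub>M (borel::'a measure)"
      unfolding h'_def by measurable
    then show ?thesis unfolding borel_prod .
  qed
  define \<nu>' where "\<nu>' = distr \<nu>t borel h"
  have \<nu>'_prob: "\<nu>' \<in> space (prob_algebra borel)"
    unfolding \<nu>'_def space_prob_algebra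
    using prob_space.prob_space_distr[OF prob_\<nu>t, of h borel] hm by (simp add: measurable_cong_sets[OF sets_\<nu>t refl])
  obtain \<kappa> where \<kappa>m: "\<kappa> \<in> borel \<rightarrow>\<^sub>M prob_algebra borel"
    and Km: "(\<lambda>x. distr (\<kappa> x) borel (\<lambda>y. (x,y))) \<in> borel \<rightarrow>\<^sub>M prob_algebra borel"
    and dis: "\<nu>' = distr \<nu>' borel fst \<bind> (\<lambda>x. distr (\<kappa> x) borel (\<lambda>y. (x,y)))"
    using disint[OF \<nu>'_prob] by blast
  have fst': "distr \<nu>' borel fst = \<eta>t"
  proof -
    have "distr \<nu>' borel fst = distr \<nu>t borel (fst \<circ> h)"
      unfolding \<nu>'_def by (rule distr_distr[OF fst_b']) (simp add: hm measurable_cong_sets[OF sets_\<nu>t refl])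
    also have "fst \<circ> h = fst" by (auto simp: h_def)
    finally show ?thesis using \<eta>t_eq by simp
  qed
  define \<psi>t where "\<psi>t x = distr (\<kappa> x) borel (dec :: real \<Rightarrow> 'a)" for x
  have \<psi>tm: "\<psi>t \<in> borel \<rightarrow>\<^sub>M prob_algebra borel"
    unfolding \<psi>t_def using measurable_comp[OF \<kappa>m measurable_distr_prob_space[OF dec_meas]] by (simp add: comp_def)
  have sets_\<eta>t: "sets \<eta>t = sets borel" by (simp add: \<eta>t_def)
  have space_\<eta>t: "space \<eta>t = UNIV" by (simp add: \<eta>t_def)
  have \<kappa>x: "sets (\<kappa> x) = sets borel" for x
    using measurable_space[OF \<kappa>m, of x] by (simp add: space_prob_algebra)
  have plan_eq: "plan \<eta>t \<psi>t = \<nu>t"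
  proof -
    have "plan \<eta>t \<psi>t = \<eta>t \<bind> (\<lambda>x. distr (distr (\<kappa> x) borel (\<lambda>y. (x,y))) borel h')"
      unfolding plan_def \<psi>t_def
    proof (intro arg_cong[where f="bind \<eta>t"] ext)
      fix x :: 'a
      have "distr (distr (\<kappa> x) borel dec) borel (\<lambda>z. (x,z)) = distr (\<kappa> x) borel ((\<lambda>z. (x,z)) \<circ> dec)"
        by (rule distr_distr[OF pair_meas]) (simp add: measurable_cong_sets[OF \<kappa>x refl])
      also have "(\<lambda>z. (x,z)) \<circ> dec = h' \<circ> (\<lambda>y. (x,y))" by (auto simp: h'_def)
      also have "distr (\<kappa> x) borel (h' \<circ> (\<lambda>y. (x,y))) = distr (distr (\<kappa> x) borel (\<lambda>y. (x,y))) borel h'"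
        by (rule distr_distr[symmetric, OF h'm]) (simp add: pair_meas measurable_cong_sets[OF \<kappa>x refl])
      finally show "distr (distr (\<kappa> x) borel dec) borel (\<lambda>z. (x,z)) = distr (distr (\<kappa> x) borel (\<lambda>y. (x,y))) borel h'" .
    qed
    also have "\<dots> = distr (\<eta>t \<bind> (\<lambda>x. distr (\<kappa> x) borel (\<lambda>y. (x,y)))) borel h'"
    proof (rule distr_bind[symmetric])
      show "(\<lambda>x. distr (\<kappa> x) borel (\<lambda>y. (x,y))) \<in> \<eta>t \<rightarrow>\<^sub>M subprob_algebra borel"
        using measurable_prob_algebraD[OF Km] by (simp add: measurable_cong_sets[OF sets_\<eta>t refl])
      show "space \<eta>t \<noteq> {}" by (simp add: space_\<eta>t)
      show "h' \<in> borel \<rightarrow>\<^sub>M borel" by (rule h'm)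
    qed
    also have "\<eta>t \<bind> (\<lambda>x. distr (\<kappa> x) borel (\<lambda>y. (x,y))) = \<nu>'" using dis fst' by simp
    also have "distr \<nu>' borel h' = distr \<nu>t borel (h' \<circ> h)"
      unfolding \<nu>'_def by (rule distr_distr[OF h'm]) (simp add: hm measurable_cong_sets[OF sets_\<nu>t refl])
    also have "h' \<circ> h = (\<lambda>p. p)" by (auto simp: h_def h'_def dec_enc)
    also have "distr \<nu>t borel (\<lambda>p. p) = \<nu>t" by (rule distr_id2) (simp add: sets_\<nu>t)
    finally show ?thesis .
  qed
  have AE_C1y: "AE w in \<Psi>. w \<in> C1y"
  proof (rule Ps.AE_I_eq_1)
    have "C1y \<subseteq> C01" unfolding C1y_def by blast
    then have "{w \<in> space \<Psi>. w \<in> C1y} = C1y" using space_Psi by blast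
    then show "emeasure \<Psi> {w \<in> space \<Psi>. w \<in> C1y} = 1" "{w \<in> space \<Psi>. w \<in> C1y} \<in> sets \<Psi>"
      using C1y1 C1yS by simp_all
  qed
  have AE_d2: "AE w in \<Psi>. d2 w s = 0" if s: "s \<in> {0..1}" for s
  proof -
    define Z where "Z = (\<lambda>v. v s) -` {0} \<inter> (C01 :: (real \<Rightarrow> 'a) set)"
    have Zs: "Z \<in> sets (curves::(real \<Rightarrow> 'a) measure)"
    proof -
      have "{0::'a} \<in> sets borel" by (rule borel_closed) simp
      then have "(\<lambda>v. v s) -` {0::'a} \<inter> C01 \<in> {(\<lambda>w. w t) -` B \<inter> C01 | t B. t \<in> {0..1} \<and> B \<in> sets (borel::'a measure)}"
        using s by blast
      then show ?thesis unfolding Z_def sets_curves by (rule sigma_sets.Basic)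
    qed
    have z0: "(\<lambda>_. 0::'a) \<in> Z" by (simp add: Z_def C01_def)
    have one: "emeasure (distr \<Psi> curves d2) Z = 1" unfolding Pd2 using Zs z0 by simp
    have "emeasure (distr \<Psi> curves d2) Z \<in> {emeasure \<Psi> (d2 -` Z \<inter> space \<Psi>), 0}"
      unfolding distr_def emeasure_measure_of_conv by simp
    then have e1: "emeasure \<Psi> (d2 -` Z \<inter> space \<Psi>) = 1" using one by auto
    then have "d2 -` Z \<inter> space \<Psi> \<in> sets \<Psi>" by (intro emeasure_neq_0_sets) simp
    moreover have "d2 -` Z \<inter> space \<Psi> = {w \<in> space \<Psi>. d2 w \<in> C01 \<and> d2 w s = 0}" by (auto simp: Z_def)
    ultimately have "AE w in \<Psi>. d2 w \<in> C01 \<and> d2 w s = 0" using e1 by (intro Ps.AE_I_eq_1) auto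
    then show ?thesis by eventually_elim auto
  qed
  have AE_d2Q: "AE w in \<Psi>. \<forall>s\<in>\<rat> \<inter> {0..1}. d2 w s = 0"
  proof (subst AE_ball_countable)
    show "countable (\<rat> \<inter> {0..1::real})" by (rule countable_subset[OF _ countable_rat]) blast
    show "\<forall>s\<in>\<rat> \<inter> {0..1}. AE w in \<Psi>. d2 w s = 0" using AE_d2 by blast
  qed
  have const: "AE w in \<Psi>. snd (ev t w) = snd (ev 0 w)"
    using AE_C1y AE_d2Q
  proof eventually_elim
    case (elim w)
    from elim(1) obtain D where D: "continuous_on {0..1} D"
      "\<forall>s\<in>{0..1}. ((\<lambda>s. snd (w s)) has_vector_derivative D s) (at s within {0..1})"
      unfolding C1y_def by auto
    have dD: "d2 w s = D s" if s: "s \<in> {0..1}" for s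
    proof -
      have "vector_derivative (\<lambda>s. snd (w s)) (at s within {0..1}) = D s"
        by (rule vector_derivative_within_closed_interval) (use s D(2) in auto)
      then show ?thesis using elim(1) s by (simp add: d2_def)
    qed
    have Dq: "D s = 0" if "s \<in> \<rat>" "s \<in> {0..1}" for s using elim(2) dD that by auto
    have D0: "D s = 0" if s: "s \<in> {0..1}" for s
    proof -
      define qn where "qn n = real_of_int (floor (2^n * s)) / 2^n" for n :: nat
      have qlim: "qn \<longlonglongrightarrow> s" unfolding qn_def by (rule dyadic_lim)
      have qin: "qn n \<in> {0..1}" for n
      proof -
        have p: "(0::real) < 2^n" by simp
        have a: "0 \<le> real_of_int (floor (2^n * s))" using s by simp
        have "real_of_int (floor (2^n * s)) \<le> 2^n * s" by linarith
        moreover have "2^n * s \<le> 2^n" using s by simp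
        ultimately have b: "real_of_int (floor (2^n * s)) \<le> 2^n" by linarith
        have "0 \<le> qn n" unfolding qn_def using a p by simp
        moreover have "qn n \<le> 1" unfolding qn_def using b p by (simp add: divide_le_eq_1)
        ultimately show ?thesis by simp
      qed
      have qrat: "qn n \<in> \<rat>" for n unfolding qn_def by (intro Rats_divide Rats_power Rats_of_int) simp
      have "(\<lambda>n. D (qn n)) \<longlonglongrightarrow> D s"
        by (rule continuous_on_tendsto_compose[OF D(1) qlim s]) (intro always_eventually allI qin)
      moreover have "(\<lambda>n. D (qn n)) = (\<lambda>n. 0)" using Dq qin qrat by auto
      ultimately have "(\<lambda>n. 0) \<longlonglongrightarrow> D s" by simp
      then show "D s = 0" using LIMSEQ_unique[OF _ tendsto_const] by blast
    qed
    have "((\<lambda>s. snd (w s)) has_vector_derivative 0) (at s within {0..1})" if "s \<in> {0..1}" for s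
      using D(2) D0 that by auto
    then obtain c where "\<And>s. s \<in> {0..1} \<Longrightarrow> snd (w s) = c"
      using has_vector_derivative_zero_constant[of "{0..1::real}" "\<lambda>s. snd (w s)"] by auto
    then show "snd (ev t w) = snd (ev 0 w)" using t by (simp add: ev_def)
  qed
  have fm: "(\<lambda>p. ennreal (norm (snd p) ^ 2)) \<in> borel_measurable (borel::('a\<times>'a) measure)"
    using snd_b by measurable
  have mom: "(\<integral>\<^sup>+x. \<integral>\<^sup>+z. ennreal (norm z ^ 2) \<partial>\<psi>t x \<partial>\<eta>t) < \<infinity>"
  proof -
    have "(\<integral>\<^sup>+x. \<integral>\<^sup>+z. ennreal (norm z ^ 2) \<partial>\<psi>t x \<partial>\<eta>t) = (\<integral>\<^sup>+p. ennreal (norm (snd p) ^ 2) \<partial>plan \<eta>t \<psi>t)"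
      by (simp add: plan_nn[OF sets_\<eta>t \<psi>tm fm])
    also have "\<dots> = (\<integral>\<^sup>+p. ennreal (norm (snd p) ^ 2) \<partial>\<nu>t)" by (simp add: plan_eq)
    also have "\<dots> = (\<integral>\<^sup>+w. ennreal (norm (snd (ev t w)) ^ 2) \<partial>\<Psi>)"
      unfolding \<nu>t_def by (rule nn_integral_distr[OF evt]) (simp add: fm)
    also have "\<dots> = (\<integral>\<^sup>+w. ennreal (norm (snd (ev 0 w)) ^ 2) \<partial>\<Psi>)"
    proof (rule nn_integral_cong_AE)
      show "AE w in \<Psi>. ennreal (norm (snd (ev t w)) ^ 2) = ennreal (norm (snd (ev 0 w)) ^ 2)"
        using const by eventually_elim simp
    qed
    also have "\<dots> = (\<integral>\<^sup>+p. ennreal (norm (snd p) ^ 2) \<partial>distr \<Psi> borel (ev 0))"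
      by (rule nn_integral_distr[OF ev0, symmetric]) (simp add: fm)
    also have "\<dots> = (\<integral>\<^sup>+x. \<integral>\<^sup>+z. ennreal (norm z ^ 2) \<partial>\<psi> x \<partial>\<mu>)"
      unfolding P0 by (simp add: plan_nn[OF sets_mu psim fm])
    finally show ?thesis using assms(2) by (simp add: Tan_def)
  qed
  have "\<psi>t \<in> Tan \<eta>t" unfolding Tan_def using \<psi>tm mom by simp
  then show "\<exists>\<psi>t. \<psi>t \<in> Tan (distr \<eta> borel (ev t)) \<and> distr \<Psi> borel (ev t) = plan (distr \<eta> borel (ev t)) \<psi>t"
    using plan_eq unfolding \<eta>t_def \<nu>t_def by auto
qed

end
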